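(* Every integer partition $\lambda$ satisfies at least one of the following: (1) $\lambda$ is novel, or $\lambda=c\mu$ for some integer $c\ge 2$ and some novel partition $\mu$; (2) there is a novel partition $\mu$ of strictly smaller length than $\lambda$ with $\lambda\Rightarrow\mu$; (3) $\lambda^{\perp B}=\emptyset$.
   Context: An integer partition is $\lambda=(\lambda_1,\dots,\lambda_k)$ with integers $\lambda_1\ge\dots\ge\lambda_k\ge 1$; $k$ is its length; $c\lambda=(c\lambda_1,\dots,c\lambda_k)$. For $v\in\mathbb{Z}^k$ let $v^{\perp B}=\{x\in\{-1,1\}^k: v\cdot x=0\}$; $\lambda^{\perp B}$ is this set for $(\lambda_1,\dots,\lambda_k)$. $V_\lambda\subset\mathbb{Z}^k$ is the set of vectors obtained from $(\lambda_1,\dots,\lambda_k)$ by permuting coordinates and changing signs of some coordinates, with first coordinate positive. For $I\subset\{1,\dots,m\}$, $\mathrm{Proj}_I:\{-1,1\}^m\to\{-1,1\}^{|I|}$ keeps the coordinates indexed by $I$. Reduction: for partitions $\mu$ of length $m$ and $\lambda$ of length $k\le m$, $\mu\Rightarrow\lambda$ iff there exist $I\subset\{1,\dots,m\}$, $|I|=k$, and $v\in V_\lambda$ with $\mathrm{Proj}_I(\mu^{\perp B})\subset v^{\perp B}$. $\mu$ strictly reduces to $\lambda$ iff $\mu\Rightarrow\lambda$ and not $\lambda\Rightarrow\mu$. Partitions $\lambda,\mu$ of the same length are equivalent iff there is $w\in V_\mu$ with $\lambda^{\perp B}=w^{\perp B}$. A partition $\lambda$ is novel iff $\lambda^{\perp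 B}\neq\emptyset$, $\lambda$ strictly reduces to no partition, and $\lambda$ is lexicographically smallest among partitions equivalent to it. *)

theory Defs
  imports Main "HOL-Library.Multiset"
begin

definition is_partition :: "nat list \<Rightarrow> bool" where
  "is_partition lam \<longleftrightarrow> lam \<noteq> [] \<and> sorted_wrt (\<ge>) lam \<and> (\<forall>x\<in>set lam. x \<ge> 1)"

definition perpB :: "int list \<Rightarrow> int list set" where
  "perpB v = {x. length x = length v \<and> set x \<subseteq> {-1, 1} \<and>
                 (\<Sum>i<length v. v ! i * x ! i) = 0}"

abbreviation lamPerpB :: "nat list \<Rightarrow> int list set" where
  "lamPerpB lam \<equiv> perpB (map int lam)"

text \<open>V_lambda: signed permutations of lambda with positive first coordinate.\<close>
definition Vset :: "nat list \<Rightarrow> int list set" where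
  "Vset lam = {v. \<exists>ys s. mset ys = mset lam \<and> length s = length lam \<and> set s \<subseteq> {-1, 1} \<and>
                  v = map2 (\<lambda>a b. a * int b) s ys \<and> v \<noteq> [] \<and> hd v > 0}"

text \<open>Projection onto coordinates indexed by I (0-based), keeping order.\<close>
definition Proj :: "nat set \<Rightarrow> int list \<Rightarrow> int list" where
  "Proj I x = nths x I"

definition reduces :: "nat list \<Rightarrow> nat list \<Rightarrow> bool" (infix "\<Rightarrow>\<^sub>p" 50) where
  "mu \<Rightarrow>\<^sub>p lam \<longleftrightarrow> is_partition mu \<and> is_partition lam \<and> length lam \<le> length mu \<and>
     (\<exists>I. I \<subseteq> {..<length mu} \<and> card I = length lam \<and>
        (\<exists>v\<in>Vset lam. Proj I ` lamPerpB mu \<subseteq> perpB v))"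

definition strictly_reduces :: "nat list \<Rightarrow> nat list \<Rightarrow> bool" where
  "strictly_reduces mu lam \<longleftrightarrow> (mu \<Rightarrow>\<^sub>p lam) \<and> \<not> (lam \<Rightarrow>\<^sub>p mu)"

definition equivalent :: "nat list \<Rightarrow> nat list \<Rightarrow> bool" where
  "equivalent lam mu \<longleftrightarrow> is_partition lam \<and> is_partition mu \<and> length lam = length mu \<and>
     (\<exists>w\<in>Vset mu. lamPerpB lam = perpB w)"

definition lex_le :: "nat list \<Rightarrow> nat list \<Rightarrow> bool" where
  "lex_le xs ys \<longleftrightarrow> xs = ys \<or> (xs, ys) \<in> lexord {(a, b). a < b}"

definition novel :: "nat list \<Rightarrow> bool" where
  "novel lam \<longleftrightarrow> is_partition lam \<and> lamPerpB lam \<noteq> {} \<and>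
     \<not> (\<exists>mu. strictly_reduces lam mu) \<and>
     (\<forall>mu. equivalent lam mu \<longrightarrow> lex_le lam mu)"

end

theory Submission imports Defs "HOL-Combinatorics.List_Permutation" begin

lemma sls_id: "sorted_wrt (<) L \<Longrightarrow> sorted_list_of_set (set L) = L"
  by (simp add: sorted_list_of_set_sort_remdups strict_sorted_iff distinct_remdups_id sorted_sort_id)

lemma nths_sorted_list:
  assumes "I \<subseteq> {..<length x}"
  shows "nths x I = map ((!) x) (sorted_list_of_set I)"
proof -
  let ?n = "length x"
  have sl: "sorted_list_of_set I = filter (\<lambda>i. i \<in> I) [0..<?n]"
  proof -
    have "sorted_wrt (<) (filter (\<lambda>i. i \<in> I) [0..<?n])"
      by (simp add: sorted_wrt_filter)
    moreover have "set (filter (\<lambda>i. i \<in> I) [0..<?n]) = I" using assms by auto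
    ultimately show ?thesis using sls_id by metis
  qed
  have "zip x [0..<?n] = map (\<lambda>i. (x!i, i)) [0..<?n]"
    by (rule nth_equalityI) auto
  then show ?thesis unfolding nths_def sl
    by (simp add: filter_map o_def map_map)
qed


definition red :: "nat list \<Rightarrow> nat list \<Rightarrow> bool" where
 "red A B \<longleftrightarrow> is_partition A \<and> is_partition B \<and> (\<exists>g s. inj_on g {..<length B} \<and> g ` {..<length B} \<subseteq> {..<length A}
    \<and> (\<forall>j<length B. s j \<in> {-1,1::int}) \<and> (\<forall>x\<in>lamPerpB A. (\<Sum>j<length B. s j * int (B!j) * x!(g j)) = 0))"

lemma redI: "is_partition A \<Longrightarrow> is_partition B \<Longrightarrow> inj_on g {..<length B} \<Longrightarrow> g ` {..<length B} \<subseteq> {..<length A}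
   \<Longrightarrow> (\<forall>j<length B. s j \<in> {-1,1::int}) \<Longrightarrow> (\<forall>x\<in>lamPerpB A. (\<Sum>j<length B. s j * int (B!j) * x!(g j)) = 0) \<Longrightarrow> red A B"
  unfolding red_def by (intro conjI exI[where x=g] exI[where x=s]; assumption)

lemma redE: assumes "red A B"
  obtains g s where "is_partition A" "is_partition B" "inj_on g {..<length B}" "g ` {..<length B} \<subseteq> {..<length A}"
   "\<forall>j<length B. s j \<in> {-1,1::int}" "\<forall>x\<in>lamPerpB A. (\<Sum>j<length B. s j * int (B!j) * x!(g j)) = 0"
  using assms unfolding red_def by blast

lemma red_parts: "red A B \<Longrightarrow> is_partition A \<and> is_partition B"
  by (simp add: red_def)

lemma lamPerpB_iff: "x \<in> lamPerpB A \<longleftrightarrow> length x = length A \<and> set x \<subseteq> {-1,1} \<and> (\<Sum>i<length A. int (A!i) * x!i) = 0"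
  by (simp add: perpB_def)

lemma red_len: "red A B \<Longrightarrow> length B \<le> length A"
proof -
  assume "red A B"
  then obtain g where "inj_on g {..<length B}" "g ` {..<length B} \<subseteq> {..<length A}" unfolding red_def by blast
  then show ?thesis using card_inj_on_le[of g "{..<length B}" "{..<length A}"] by simp
qed

lemma red_id: "is_partition A \<Longrightarrow> is_partition B \<Longrightarrow> length A = length B \<Longrightarrow> lamPerpB A \<subseteq> lamPerpB B \<Longrightarrow> red A B"
proof -
  assume a: "is_partition A" "is_partition B" "length A = length B" "lamPerpB A \<subseteq> lamPerpB B"
  have f1: "\<forall>x\<in>lamPerpB A. (\<Sum>j<length B. (\<lambda>_. 1::int) j * int (B!j) * x!(id j)) = 0"
  proof
    fix x assume "x \<in> lamPerpB A"
    then have "x \<in> lamPerpB B" using a(4) by blast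
    then show "(\<Sum>j<length B. (\<lambda>_. 1::int) j * int (B!j) * x!(id j)) = 0" by (simp add: lamPerpB_iff)
  qed
  show ?thesis
    apply (rule redI[where g=id and s="\<lambda>_. 1"])
    using a f1 by simp_all
qed

lemma push:
  assumes "g ` {..<length B} \<subseteq> {..<length A}" "\<forall>j<length B. s j \<in> {-1,1::int}" "x \<in> lamPerpB A"
    "(\<Sum>j<length B. s j * int (B!j) * x!(g j)) = 0"
  shows "map (\<lambda>j. s j * x!(g j)) [0..<length B] \<in> lamPerpB B"
proof -
  have lx: "length x = length A" "set x \<subseteq> {-1,1}" using assms(3) lamPerpB_iff by auto
  have st: "set (map (\<lambda>j. s j * x!(g j)) [0..<length B]) \<subseteq> {-1,1}"
  proof
    fix y assume "y \<in> set (map (\<lambda>j. s j * x!(g j)) [0..<length B])"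
    then obtain j where j: "j < length B" "y = s j * x!(g j)" by auto
    have "g j < length x" using assms(1) j(1) lx(1) by auto
    then have "x!(g j) \<in> {-1,1}" using lx(2) nth_mem by blast
    then show "y \<in> {-1,1}" using assms(2) j by auto
  qed
  have sm: "(\<Sum>i<length B. int (B!i) * map (\<lambda>j. s j * x!(g j)) [0..<length B] ! i)
      = (\<Sum>j<length B. s j * int (B!j) * x!(g j))"
    by (rule sum.cong) (auto simp: algebra_simps)
  show ?thesis unfolding lamPerpB_iff
  proof (intro conjI)
    show "set (map (\<lambda>j. s j * x!(g j)) [0..<length B]) \<subseteq> {-1,1}" by (rule st)
    show "(\<Sum>i<length B. int (B!i) * map (\<lambda>j. s j * x!(g j)) [0..<length B] ! i) = 0" using sm assms(4) by (simp only:)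
  qed (simp only: length_map length_upt)
qed

lemma red_nonempty: "red A B \<Longrightarrow> lamPerpB A \<noteq> {} \<Longrightarrow> lamPerpB B \<noteq> {}"
proof -
  assume r: "red A B" and ne: "lamPerpB A \<noteq> {}"
  then obtain x where x: "x \<in> lamPerpB A" by blast
  obtain g s where gs: "g ` {..<length B} \<subseteq> {..<length A}" "\<forall>j<length B. s j \<in> {-1,1::int}"
     "\<forall>x\<in>lamPerpB A. (\<Sum>j<length B. s j * int (B!j) * x!(g j)) = 0" using r unfolding red_def by blast
  show ?thesis using push[OF gs(1,2) x] gs(3) x by blast
qed

lemma red_trans: "red A B \<Longrightarrow> red B C \<Longrightarrow> red A C"
proof -
  assume r1: "red A B" and r2: "red B C"
  obtain g s where gs: "inj_on g {..<length B}" "g ` {..<length B} \<subseteq> {..<length A}" "\<forall>j<length B. s j \<in> {-1,1::int}"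
     "\<forall>x\<in>lamPerpB A. (\<Sum>j<length B. s j * int (B!j) * x!(g j)) = 0" using r1 unfolding red_def by blast
  obtain h t where ht: "inj_on h {..<length C}" "h ` {..<length C} \<subseteq> {..<length B}" "\<forall>j<length C. t j \<in> {-1,1::int}"
     "\<forall>x\<in>lamPerpB B. (\<Sum>j<length C. t j * int (C!j) * x!(h j)) = 0" using r2 unfolding red_def by blast
  have "inj_on (g \<circ> h) {..<length C}"
    using ht(1,2) gs(1) by (meson comp_inj_on inj_on_subset)
  moreover have "(g \<circ> h) ` {..<length C} \<subseteq> {..<length A}" using ht(2) gs(2) by auto
  moreover have "\<forall>j<length C. (\<lambda>l. t l * s (h l)) j \<in> {-1,1::int}"
  proof (intro allI impI)
    fix j assume "j < length C"
    then have "t j \<in> {-1,1}" "s (h j) \<in> {-1,1}" using ht(2,3) gs(3) by auto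
    then show "(\<lambda>l. t l * s (h l)) j \<in> {-1,1::int}" by auto
  qed
  moreover have "\<forall>x\<in>lamPerpB A. (\<Sum>j<length C. (\<lambda>l. t l * s (h l)) j * int (C!j) * x!((g \<circ> h) j)) = 0"
  proof
    fix x assume x: "x \<in> lamPerpB A"
    let ?y = "map (\<lambda>j. s j * x!(g j)) [0..<length B]"
    have y: "?y \<in> lamPerpB B" using push[OF gs(2,3) x] gs(4) x by blast
    have "(\<Sum>j<length C. (\<lambda>l. t l * s (h l)) j * int (C!j) * x!((g \<circ> h) j))
       = (\<Sum>j<length C. t j * int (C!j) * ?y!(h j))"
    proof (rule sum.cong)
      fix j assume "j \<in> {..<length C}"
      then have "h j < length B" using ht(2) by auto
      then show "(\<lambda>l. t l * s (h l)) j * int (C!j) * x!((g \<circ> h) j) = t j * int (C!j) * ?y!(h j)"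
        by simp
    qed simp
    also have "\<dots> = 0" using ht(4) y by blast
    finally show "(\<Sum>j<length C. (\<lambda>l. t l * s (h l)) j * int (C!j) * x!((g \<circ> h) j)) = 0" .
  qed
  moreover have "is_partition A" "is_partition C" using r1 r2 red_parts by blast+
  ultimately show ?thesis by (intro redI[where g="g \<circ> h" and s="\<lambda>l. t l * s (h l)"])
qed

lemma perp_scale: "c > 0 \<Longrightarrow> lamPerpB (map (\<lambda>x. c*x) mu) = lamPerpB mu"
proof -
  assume c: "c > 0"
  have e: "(\<Sum>i<length mu. int (map (\<lambda>x. c*x) mu ! i) * x!i) = int c * (\<Sum>i<length mu. int (mu!i) * x!i)" for x :: "int list"
    by (simp add: sum_distrib_left mult.assoc)
  show ?thesis unfolding perpB_def using e c by auto
qed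

lemma part_scale: "is_partition (map (\<lambda>x. c*x) rho) \<Longrightarrow> is_partition rho \<and> c \<ge> 1"
proof -
  assume p: "is_partition (map (\<lambda>x. c*x) rho)"
  then have ne: "rho \<noteq> []" and ge: "\<forall>x\<in>set rho. c*x \<ge> 1" and so: "sorted_wrt (\<lambda>a b. c*a \<ge> c*b) rho"
    unfolding is_partition_def by (auto simp: sorted_wrt_map)
  have c1: "c \<ge> 1" using ne ge by (cases rho) auto
  have "\<forall>x\<in>set rho. x \<ge> 1" using ge by (simp add: Suc_le_eq)
  moreover have "sorted_wrt (\<ge>) rho" by (rule sorted_wrt_mono_rel[OF _ so]) (use c1 in simp)
  ultimately show ?thesis using ne c1 unfolding is_partition_def by blast
qed

lemma Lprop:
  fixes a b :: nat and mu nu :: "nat list"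
  assumes "a>0" "b>0" "map (\<lambda>x. a*x) mu = map (\<lambda>x. b*x) nu"
  shows "\<exists>rho d e. mu = map (\<lambda>x. d*x) rho \<and> nu = map (\<lambda>x. e*x) rho"
proof -
  define g where "g = gcd a b"
  define a' where "a' = a div g"
  define b' where "b' = b div g"
  have g0: "g > 0" using assms(1) g_def by simp
  have ab: "a = g * a'" "b = g*b'" by (simp_all add: a'_def b'_def g_def)
  have cop: "coprime a' b'" using div_gcd_coprime[of a b] assms(1) a'_def b'_def g_def by simp
  have b'0: "b' > 0" using ab assms(2) by simp
  have len: "length mu = length nu" using assms(3) by (metis length_map)
  have eq: "a' * mu!i = b' * nu!i" if "i < length mu" for i
  proof -
    have "map (\<lambda>x. a*x) mu ! i = map (\<lambda>x. b*x) nu ! i" using assms(3) by simp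
    then have "a * mu!i = b * nu!i" using that len by simp
    then show ?thesis using ab g0 by (simp add: mult.assoc)
  qed
  have dv: "b' dvd mu!i" if "i<length mu" for i
  proof -
    have "b' dvd a' * mu!i" using eq[OF that] by simp
    then show ?thesis using cop by (simp add: coprime_commute coprime_dvd_mult_right_iff)
  qed
  define rho where "rho = map (\<lambda>x. x div b') mu"
  have "mu = map (\<lambda>x. b'*x) rho"
    by (rule nth_equalityI) (simp_all add: rho_def dv)
  moreover have "nu = map (\<lambda>x. a'*x) rho"
  proof (rule nth_equalityI)
    show "length nu = length (map (\<lambda>x. a'*x) rho)" using len by (simp add: rho_def)
    fix i assume "i < length nu"
    then have i: "i < length mu" using len by simp
    have "b' * nu!i = a' * (b' * (mu!i div b'))" using eq[OF i] dv[OF i] by simp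
    then have "b' * nu!i = b' * (a' * (mu!i div b'))" by (simp add: mult.left_commute)
    then have "nu!i = a' * (mu!i div b')" using b'0 by simp
    then show "nu!i = map (\<lambda>x. a'*x) rho ! i" using i by (simp add: rho_def)
  qed
  ultimately show ?thesis by blast
qed

lemma sorted_desc_eq:
  fixes xs ys :: "nat list"
  assumes "sorted_wrt (\<ge>) xs" "sorted_wrt (\<ge>) ys" "mset xs = mset ys"
  shows "xs = ys"
proof -
  have "sorted (rev xs)" "sorted (rev ys)" using assms(1,2) by (simp_all add: sorted_wrt_rev)
  moreover have "mset (rev xs) = mset (rev ys)" using assms(3) by simp
  ultimately have "sort (rev ys) = rev xs" "sort (rev ys) = rev ys"
    using properties_for_sort by metis+
  then show ?thesis by simp
qed

lemma sorted_scale: "sorted_wrt (\<ge>) xs \<Longrightarrow> sorted_wrt (\<ge>) (map (\<lambda>x. (c::nat)*x) xs)"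
  unfolding sorted_wrt_map by (rule sorted_wrt_mono_rel[where P="(\<ge>)"]) (auto simp: mult_le_mono2)

lemma mset_perm:
  assumes "bij_betw p {..<m} {..<m}"
  shows "mset (map (\<lambda>i. f (p i)) [0..<m]) = mset (map f [0..<m])"
proof -
  have "mset (map (\<lambda>i. f (p i)) [0..<m]) = image_mset f (image_mset p (mset_set {..<m}))"
    by (simp add: atLeast0LessThan multiset.map_comp o_def)
  also have "image_mset p (mset_set {..<m}) = mset_set {..<m}"
    using assms image_mset_mset_set[of p "{..<m}"] unfolding bij_betw_def by simp
  finally show ?thesis by (simp add: atLeast0LessThan)
qed

lemma red_of_parts:
  assumes pA: "is_partition A" and pB: "is_partition B" and I: "I \<subseteq> {..<length A}" and cI: "card I = length B"
    and v: "v \<in> Vset B" and pr: "Proj I ` lamPerpB A \<subseteq> perpB v"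
  shows "red A B"
proof -
  let ?m = "length B"
  obtain ys s where ys: "mset ys = mset B" "length s = ?m" "set s \<subseteq> {-1,1}" "v = map2 (\<lambda>a b. a * int b) s ys"
    using v unfolding Vset_def by blast
  have lys: "length ys = ?m" using ys(1) mset_eq_length by metis
  obtain f where f: "bij_betw f {..<?m} {..<length ys}" "\<forall>i<?m. B!i = ys!(f i)"
    using permutation_Ex_bij[of B ys] ys(1) by auto
  have bf: "bij_betw f {..<?m} {..<?m}" using f(1) lys by simp
  define L where "L = sorted_list_of_set I"
  have finI: "finite I" using I finite_subset by blast
  have lL: "length L = ?m" using cI finI L_def by simp
  have dL: "distinct L" and sL: "set L = I" using finI L_def by simp_all
  define g where "g j = L!(f j)" for j
  define sg where "sg j = s!(f j)" for j
  have fm: "f j < ?m" if "j < ?m" for j using bf that bij_betwE by blast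
  have bL: "bij_betw ((!) L) {..<?m} I" using bij_betw_nth[OF dL] lL sL by simp
  have bg: "bij_betw g {..<?m} I"
    using bij_betw_trans[OF bf bL] unfolding g_def by (simp add: o_def)
  have inj: "inj_on g {..<?m}" using bg bij_betw_imp_inj_on by blast
  have img: "g ` {..<?m} \<subseteq> {..<length A}" using bg I bij_betw_imp_surj_on by blast
  have sgn: "\<forall>j<?m. sg j \<in> {-1,1}"
  proof (intro allI impI)
    fix j assume "j < ?m"
    then have "s!(f j) \<in> set s" using fm ys(2) by simp
    then show "sg j \<in> {-1,1}" using ys(3) sg_def by auto
  qed
  have sum: "\<forall>x\<in>lamPerpB A. (\<Sum>j<?m. sg j * int (B!j) * x!(g j)) = 0"
  proof
    fix x assume x: "x \<in> lamPerpB A"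
    have lx: "length x = length A" using x lamPerpB_iff by blast
    have "Proj I x \<in> perpB v" using pr x by blast
    then have z0: "(\<Sum>i<length v. v!i * (nths x I)!i) = 0" by (simp add: perpB_def Proj_def)
    have lv: "length v = ?m" using ys(2,4) lys by simp
    have nx: "nths x I = map ((!) x) L" using nths_sorted_list[of I x] I lx L_def by simp
    have "(\<Sum>i<length v. v!i * (nths x I)!i) = (\<Sum>i<?m. (s!i * int (ys!i)) * x!(L!i))"
      by (rule sum.cong) (simp_all add: lv nx ys(2,4) lys lL)
    then have z: "(\<Sum>i<?m. (s!i * int (ys!i)) * x!(L!i)) = 0" using z0 by simp
    have "(\<Sum>j<?m. sg j * int (B!j) * x!(g j)) = (\<Sum>j<?m. (\<lambda>i. (s!i * int (ys!i)) * x!(L!i)) (f j))"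
      by (rule sum.cong) (simp_all add: sg_def g_def f(2))
    also have "\<dots> = (\<Sum>i<?m. (s!i * int (ys!i)) * x!(L!i))"
      by (rule sum.reindex_bij_betw[OF bf])
    finally show "(\<Sum>j<?m. sg j * int (B!j) * x!(g j)) = 0" using z by simp
  qed
  show ?thesis by (rule redI[OF pA pB inj img sgn sum])
qed

lemma red_to_reduces:
  assumes r: "red A B"
  shows "A \<Rightarrow>\<^sub>p B"
proof -
  obtain g s where pA: "is_partition A" and pB: "is_partition B" and inj: "inj_on g {..<length B}"
    and img: "g ` {..<length B} \<subseteq> {..<length A}" and sg: "\<forall>j<length B. s j \<in> {-1,1::int}"
    and z: "\<forall>x\<in>lamPerpB A. (\<Sum>j<length B. s j * int (B!j) * x!(g j)) = 0"
    using r by (rule redE)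
  let ?m = "length B"
  define I where "I = g ` {..<?m}"
  have cI: "card I = ?m" using inj I_def card_image by fastforce
  have finI: "finite I" using I_def by simp
  define L where "L = sorted_list_of_set I"
  have lL: "length L = ?m" and dL: "distinct L" and sL: "set L = I" using cI finI L_def by auto
  have be: "bij_betw ((!) L) {..<?m} I" using bij_betw_nth[OF dL] lL sL by simp
  have bg: "bij_betw g {..<?m} I" using inj I_def bij_betw_imageI by blast
  define p where "p = inv_into {..<?m} g \<circ> (!) L"
  have bp: "bij_betw p {..<?m} {..<?m}" unfolding p_def
    using bij_betw_trans[OF be bij_betw_inv_into[OF bg]] .
  have gp: "g (p i) = L!i" if "i < ?m" for i
  proof -
    have "L!i \<in> I" using lL sL that by (metis nth_mem)
    then have "L!i \<in> g ` {..<?m}" unfolding I_def .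
    then have "g (inv_into {..<?m} g (L!i)) = L!i" by (rule f_inv_into_f)
    then show ?thesis by (simp add: p_def)
  qed
  have pm: "p i < ?m" if "i<?m" for i using bp that bij_betwE by blast
  have m0: "?m > 0" using pB is_partition_def by simp
  define \<sigma> where "\<sigma> = s (p 0)"
  have \<sigma>: "\<sigma> \<in> {-1,1}" using sg pm m0 \<sigma>_def by simp
  have \<sigma>2: "\<sigma> * \<sigma> = 1" using \<sigma> by auto
  define ys where "ys = map (\<lambda>i. B!(p i)) [0..<?m]"
  define sl where "sl = map (\<lambda>i. \<sigma> * s (p i)) [0..<?m]"
  define v where "v = map2 (\<lambda>a b. a * int b) sl ys"
  have vnth: "v!i = \<sigma> * s (p i) * int (B!(p i))" if "i<?m" for i using that by (simp add: v_def sl_def ys_def)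
  have lv: "length v = ?m" by (simp add: v_def sl_def ys_def)
  have vV: "v \<in> Vset B"
  proof -
    have "mset ys = mset (map ((!) B) [0..<?m])" unfolding ys_def using mset_perm[OF bp, of "(!) B"] by simp
    then have m1: "mset ys = mset B" by (simp add: map_nth)
    have l2: "length sl = ?m" by (simp add: sl_def)
    have s3: "set sl \<subseteq> {-1,1}"
    proof
      fix y assume "y \<in> set sl"
      then obtain i where i: "i < ?m" "y = \<sigma> * s (p i)" unfolding sl_def by auto
      have "s (p i) \<in> {-1,1}" using sg pm i(1) by blast
      then show "y \<in> {-1,1}" using \<sigma> i(2) by auto
    qed
    have ne: "v \<noteq> []" using lv m0 by auto
    have "hd v = v!0" using ne by (simp add: hd_conv_nth)
    also have "\<dots> = (\<sigma> * \<sigma>) * int (B!(p 0))" using vnth[OF m0] \<sigma>_def by simp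
    also have "\<dots> = int (B!(p 0))" using \<sigma>2 by simp
    finally have hv: "hd v = int (B!(p 0))" .
    have "B!(p 0) \<in> set B" using pm[OF m0] by simp
    then have "B!(p 0) \<ge> 1" using pB is_partition_def by blast
    then have "hd v > 0" using hv by simp
    then show ?thesis unfolding Vset_def using m1 l2 s3 ne v_def by blast
  qed
  have "Proj I ` lamPerpB A \<subseteq> perpB v"
  proof
    fix y assume "y \<in> Proj I ` lamPerpB A"
    then obtain x where x: "x \<in> lamPerpB A" "y = Proj I x" by blast
    have lx: "length x = length A" "set x \<subseteq> {-1,1}" using x(1) lamPerpB_iff by blast+
    have IA: "I \<subseteq> {..<length x}" using img I_def lx by simp
    have yL: "y = map ((!) x) L" using x(2) nths_sorted_list[OF IA] by (simp add: Proj_def L_def)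
    have "length y = length v" using yL lL lv by simp
    moreover have "set y \<subseteq> {-1,1}"
    proof
      fix t assume "t \<in> set y"
      then obtain i where i: "i < ?m" "t = x!(L!i)" using yL lL by (auto simp: in_set_conv_nth)
      have "L!i \<in> I" using lL sL i(1) by (metis nth_mem)
      then have "L!i < length x" using IA by auto
      then have "x!(L!i) \<in> set x" by simp
      then show "t \<in> {-1,1}" using lx(2) i(2) by auto
    qed
    moreover have "(\<Sum>i<length v. v!i * y!i) = 0"
    proof -
      have "(\<Sum>i<length v. v!i * y!i) = (\<Sum>i<?m. \<sigma> * ((\<lambda>j. s j * int (B!j) * x!(g j)) (p i)))"
      proof (rule sum.cong)
        fix i assume "i \<in> {..<?m}"
        then have i: "i < ?m" by simp
        have "y!i = x!(g (p i))" using yL lL i gp[OF i] by simp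
        then show "v!i * y!i = \<sigma> * ((\<lambda>j. s j * int (B!j) * x!(g j)) (p i))" using vnth[OF i] by simp
      qed (simp add: lv)
      also have "\<dots> = \<sigma> * (\<Sum>i<?m. (\<lambda>j. s j * int (B!j) * x!(g j)) (p i))"
        by (simp add: sum_distrib_left)
      also have "(\<Sum>i<?m. (\<lambda>j. s j * int (B!j) * x!(g j)) (p i)) = (\<Sum>j<?m. s j * int (B!j) * x!(g j))"
        by (rule sum.reindex_bij_betw[OF bp])
      also have "\<dots> = 0" using z x(1) by blast
      finally show ?thesis by simp
    qed
    ultimately show "y \<in> perpB v" by (simp add: perpB_def)
  qed
  moreover have "I \<subseteq> {..<length A}" using img I_def by simp
  moreover have "length B \<le> length A" using red_len r by blast
  ultimately show ?thesis unfolding reduces_def using pA pB cI vV by blast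
qed

lemma reduces_to_red: "A \<Rightarrow>\<^sub>p B \<Longrightarrow> red A B"
  unfolding reduces_def using red_of_parts by blast

lemma equiv_red: "equivalent A B \<Longrightarrow> red A B"
proof -
  assume "equivalent A B"
  then obtain w where w: "is_partition A" "is_partition B" "length A = length B" "w \<in> Vset B" "lamPerpB A = perpB w"
    unfolding equivalent_def by blast
  have "Proj {..<length A} ` lamPerpB A \<subseteq> perpB w"
  proof
    fix y assume "y \<in> Proj {..<length A} ` lamPerpB A"
    then obtain x where x: "x \<in> lamPerpB A" "y = Proj {..<length A} x" by blast
    have "length x = length A" using x(1) lamPerpB_iff by blast
    then have "y = x" using x(2) by (simp add: Proj_def)
    then show "y \<in> perpB w" using x(1) w(5) by simp
  qed
  then show ?thesis using red_of_parts[where I="{..<length A}"] w by auto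
qed

lemma constr:
  assumes pA: "is_partition A" and S: "S = {l. l<length A \<and> w l \<noteq> 0}" and ne: "S \<noteq> {}"
    and z: "\<forall>x\<in>lamPerpB A. (\<Sum>l<length A. w l * x!l) = (0::int)"
  shows "\<exists>rho. red A rho \<and> length rho = card S"
proof -
  have finS: "finite S" using S by simp
  define L where "L = sorted_list_of_set S"
  define m where "m = card S"
  have lL: "length L = m" and dL: "distinct L" and sL: "set L = S" using finS L_def m_def by auto
  define V where "V = map (\<lambda>l. nat \<bar>w l\<bar>) L"
  define rho where "rho = rev (sort V)"
  have mr: "mset rho = mset V" by (simp add: rho_def)
  have lV: "length V = m" using lL V_def by simp
  have lr: "length rho = m" using lV by (simp add: rho_def)
  have m0: "m > 0" using ne finS m_def by (simp add: card_gt_0_iff)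
  have pr: "is_partition rho"
    unfolding is_partition_def
  proof (intro conjI ballI)
    show "rho \<noteq> []" using lr m0 by auto
    have "sorted (sort V)" by simp
    then show "sorted_wrt (\<ge>) rho" by (simp add: rho_def sorted_wrt_rev)
    fix x assume "x \<in> set rho"
    then have "x \<in> set V" using mr by (metis set_mset_mset)
    then obtain l where l: "l \<in> S" "x = nat \<bar>w l\<bar>" using sL V_def by auto
    then have "w l \<noteq> 0" using S by simp
    then show "x \<ge> 1" using l(2) by simp
  qed
  obtain f where f: "bij_betw f {..<length rho} {..<length V}" "\<forall>i<length rho. rho!i = V!(f i)"
    using permutation_Ex_bij[of rho V] mr by auto
  have bf: "bij_betw f {..<m} {..<m}" using f(1) lr lV by simp
  define g where "g j = L!(f j)" for j
  define sg where "sg j = sgn (w (g j))" for j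
  have bL: "bij_betw ((!) L) {..<m} S" using bij_betw_nth[OF dL] lL sL by simp
  have bg: "bij_betw g {..<m} S"
    using bij_betw_trans[OF bf bL] unfolding g_def by (simp add: o_def)
  have inj: "inj_on g {..<length rho}" using bg bij_betw_imp_inj_on lr by metis
  have img: "g ` {..<length rho} \<subseteq> {..<length A}" using bg S lr bij_betw_imp_surj_on by fastforce
  have gS: "g j \<in> S" if "j < m" for j using bg that bij_betwE by blast
  have sgn: "\<forall>j<length rho. sg j \<in> {-1,1}"
  proof (intro allI impI)
    fix j assume "j < length rho"
    then have "w (g j) \<noteq> 0" using gS lr S by auto
    then show "sg j \<in> {-1,1}" unfolding sg_def by (auto simp: sgn_if)
  qed
  have sum: "\<forall>x\<in>lamPerpB A. (\<Sum>j<length rho. sg j * int (rho!j) * x!(g j)) = 0"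
  proof
    fix x assume x: "x \<in> lamPerpB A"
    have "(\<Sum>j<length rho. sg j * int (rho!j) * x!(g j)) = (\<Sum>j<m. (\<lambda>l. w l * x!l) (g j))"
    proof (rule sum.cong)
      fix j assume "j \<in> {..<m}"
      then have j: "j < m" by simp
      have fj: "f j < m" using bf j bij_betwE by blast
      have "rho!j = V!(f j)" using f(2) j lr by simp
      also have "\<dots> = nat \<bar>w (g j)\<bar>" using fj lL unfolding V_def g_def by simp
      finally have "rho!j = nat \<bar>w (g j)\<bar>" .
      then have "int (rho!j) = \<bar>w (g j)\<bar>" by simp
      then show "sg j * int (rho!j) * x!(g j) = (\<lambda>l. w l * x!l) (g j)"
        unfolding sg_def by (simp add: sgn_mult_abs)
    qed (simp add: lr)
    also have "\<dots> = (\<Sum>l\<in>S. w l * x!l)" by (rule sum.reindex_bij_betw[OF bg])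
    also have "\<dots> = (\<Sum>l<length A. w l * x!l)"
      by (rule sum.mono_neutral_left) (auto simp: S)
    also have "\<dots> = 0" using z x by blast
    finally show "(\<Sum>j<length rho. sg j * int (rho!j) * x!(g j)) = 0" .
  qed
  have "red A rho" by (rule redI[OF pA pr inj img sgn sum])
  then show ?thesis using lr m_def by blast
qed

lemma KL:
  assumes r: "red A B" and len: "length B = length A" and short: "\<forall>rho. red A rho \<longrightarrow> length A \<le> length rho"
  shows "\<exists>a b. a>0 \<and> b>0 \<and> map (\<lambda>x. a*x) B = map (\<lambda>x. b*x) A"
proof -
  obtain g s where pA: "is_partition A" and pB: "is_partition B" and inj: "inj_on g {..<length B}"
    and img: "g ` {..<length B} \<subseteq> {..<length A}" and sg: "\<forall>j<length B. s j \<in> {-1,1::int}"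
    and z: "\<forall>x\<in>lamPerpB A. (\<Sum>j<length B. s j * int (B!j) * x!(g j)) = 0"
    using r by (rule redE)
  let ?k = "length A"
  have gimg: "g ` {..<?k} = {..<?k}" using endo_inj_surj[of "{..<?k}" g] inj img len by simp
  have bg: "bij_betw g {..<?k} {..<?k}" using inj gimg len bij_betw_imageI by fastforce
  define gi where "gi = inv_into {..<?k} g"
  have bgi: "bij_betw gi {..<?k} {..<?k}" using bij_betw_inv_into[OF bg] gi_def by simp
  have gig: "gi (g j) = j" if "j < ?k" for j
    using inj len that gi_def inv_into_f_f by (metis lessThan_iff)
  have gim: "gi i < ?k" if "i<?k" for i using bgi bij_betwE that by blast
  define w where "w i = s (gi i) * int (B!(gi i))" for i
  have W: "(\<Sum>i<?k. w i * x!i) = 0" if x: "x \<in> lamPerpB A" for x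
  proof -
    have "(\<Sum>i<?k. w i * x!i) = (\<Sum>j<?k. (\<lambda>i. w i * x!i) (g j))"
      by (rule sum.reindex_bij_betw[OF bg, symmetric])
    also have "\<dots> = (\<Sum>j<length B. s j * int (B!j) * x!(g j))"
      by (rule sum.cong) (simp_all add: len w_def gig)
    finally show ?thesis using z x by simp
  qed
  have kpos: "?k > 0" using pA is_partition_def by simp
  have Ai: "A!i \<ge> 1" if "i < ?k" for i
  proof -
    have "A!i \<in> set A" using that by simp
    then show ?thesis using pA is_partition_def by blast
  qed
  have Bi: "B!i \<ge> 1" if "i < ?k" for i
  proof -
    have "B!i \<in> set B" using that len by simp
    then show ?thesis using pB is_partition_def by blast
  qed
  have absw: "\<bar>w i\<bar> = int (B!(gi i))" if "i<?k" for i
  proof -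
    have "s (gi i) \<in> {-1,1}" using sg gim[OF that] len by simp
    then show ?thesis unfolding w_def by (auto simp: abs_mult)
  qed
  have propw: "w i * int (A!0) = w 0 * int (A!i)" if i: "i<?k" for i
  proof (rule ccontr)
    assume ne: "w i * int (A!0) \<noteq> w 0 * int (A!i)"
    define w' where "w' l = int (A!0) * w l - w 0 * int (A!l)" for l
    define S where "S = {l. l < ?k \<and> w' l \<noteq> 0}"
    have iS: "i \<in> S" using i ne by (simp add: S_def w'_def mult.commute)
    have "S \<subseteq> {..<?k} - {0}" by (auto simp: S_def w'_def)
    then have "card S \<le> card ({..<?k} - {0})" by (simp add: card_mono)
    also have "\<dots> < ?k" using kpos by simp
    finally have cS: "card S < ?k" .
    have "\<forall>x\<in>lamPerpB A. (\<Sum>l<?k. w' l * x!l) = 0"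
    proof
      fix x assume x: "x \<in> lamPerpB A"
      have "(\<Sum>l<?k. w' l * x!l) = int (A!0) * (\<Sum>l<?k. w l * x!l) - w 0 * (\<Sum>l<?k. int (A!l) * x!l)"
        by (simp add: w'_def sum_subtractf sum_distrib_left algebra_simps)
      also have "\<dots> = 0" using W[OF x] x by (simp add: lamPerpB_iff)
      finally show "(\<Sum>l<?k. w' l * x!l) = 0" .
    qed
    then obtain rho where "red A rho" "length rho = card S"
      using constr[OF pA S_def] iS by blast
    then show False using short cS by fastforce
  qed
  define Wn where "Wn = nat \<bar>w 0\<bar>"
  have eqi: "A!0 * B!(gi i) = Wn * A!i" if i: "i<?k" for i
  proof -
    have "\<bar>w i * int (A!0)\<bar> = \<bar>w 0 * int (A!i)\<bar>" using propw[OF i] by simp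
    then have "int (B!(gi i)) * int (A!0) = int Wn * int (A!i)"
      using absw[OF i] absw[OF kpos] by (simp add: abs_mult Wn_def)
    then have "int (A!0 * B!(gi i)) = int (Wn * A!i)" by (simp add: mult.commute)
    then show ?thesis by (simp only: of_nat_eq_iff)
  qed
  have Wpos: "Wn > 0" using absw[OF kpos] Bi[OF gim[OF kpos]] by (simp add: Wn_def)
  have a0: "A!0 > 0" using Ai[OF kpos] by simp
  have s1: "sorted_wrt (\<ge>) (map (\<lambda>x. A!0*x) B)" using pB sorted_scale is_partition_def by blast
  have s2: "sorted_wrt (\<ge>) (map (\<lambda>x. Wn*x) A)" using pA sorted_scale is_partition_def by blast
  have e1: "map (\<lambda>x. Wn*x) A = map (\<lambda>i. (\<lambda>j. A!0 * B!j) (gi i)) [0..<?k]"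
    by (rule nth_equalityI) (simp_all add: eqi)
  have e2: "map (\<lambda>j. A!0 * B!j) [0..<?k] = map (\<lambda>x. A!0*x) B"
    by (rule nth_equalityI) (simp_all add: len)
  have "mset (map (\<lambda>x. Wn*x) A) = mset (map (\<lambda>j. A!0 * B!j) [0..<?k])"
    using e1 mset_perm[OF bgi, of "\<lambda>j. A!0 * B!j"] by simp
  then have "mset (map (\<lambda>x. Wn*x) A) = mset (map (\<lambda>x. A!0*x) B)" using e2 by simp
  then have "map (\<lambda>x. A!0*x) B = map (\<lambda>x. Wn*x) A" using sorted_desc_eq[OF s1 s2] by simp
  then show ?thesis using a0 Wpos by blast
qed

lemma perp_prop: "a>0 \<Longrightarrow> b>0 \<Longrightarrow> map (\<lambda>x. a*x) B = map (\<lambda>x. b*x) A \<Longrightarrow> lamPerpB B = lamPerpB A"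
  by (metis perp_scale)

lemma main: "is_partition lam \<Longrightarrow> lamPerpB lam \<noteq> {} \<Longrightarrow>
  (novel lam \<or> (\<exists>c::nat. \<exists>mu. c \<ge> 2 \<and> novel mu \<and> lam = map (\<lambda>x. c * x) mu))
    \<or> (\<exists>mu. novel mu \<and> length mu < length lam \<and> red lam mu)"
proof (induction "length lam" arbitrary: lam rule: less_induct)
  case less
  show ?case
  proof (cases "\<exists>nu. red lam nu \<and> length nu < length lam")
    case True
    then obtain nu where nu: "red lam nu" "length nu < length lam" by blast
    have pn: "is_partition nu" using nu(1) red_def by blast
    have ne: "lamPerpB nu \<noteq> {}" using red_nonempty nu(1) less.prems(2) by blast
    have "\<exists>rho. novel rho \<and> length rho \<le> length nu \<and> red nu rho"
    proof -
      from less.hyps[OF nu(2) pn ne] consider "novel nu"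
        | c rho where "c\<ge>2" "novel rho" "nu = map (\<lambda>x. c*x) rho"
        | rho where "novel rho" "length rho < length nu" "red nu rho" by blast
      then show ?thesis
      proof cases
        case 1 then show ?thesis using red_id[OF pn pn] by auto
      next
        case 2
        have pr: "is_partition rho" using 2(2) novel_def by blast
        have "lamPerpB nu = lamPerpB rho" using 2 perp_scale[of c rho] by simp
        then have "red nu rho" using red_id[OF pn pr] 2(3) by simp
        then show ?thesis using 2 by auto
      next
        case 3 then show ?thesis by auto
      qed
    qed
    then obtain rho where "novel rho" "length rho \<le> length nu" "red nu rho" by blast
    then show ?thesis using red_trans[OF nu(1)] nu(2) by fastforce
  next
    case False
    hence short: "\<forall>rho. red lam rho \<longrightarrow> length lam \<le> length rho" by (auto simp: not_less)
    define C where "C = {rho. is_partition rho \<and> (\<exists>c. lam = map (\<lambda>x. c*x) rho)}"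
    have "lam = map (\<lambda>x. 1*x) lam" by simp
    then have "lam \<in> C" unfolding C_def using less.prems(1) by blast
    then obtain lam0 where l0: "lam0 \<in> C" "\<forall>y\<in>C. hd lam0 \<le> hd y"
      using ex_has_least_nat[of "\<lambda>r. r\<in>C" lam hd] by blast
    then obtain c where lc: "lam = map (\<lambda>x. c*x) lam0" and p0: "is_partition lam0"
      unfolding C_def by blast
    have c1: "c \<ge> 1" using part_scale less.prems(1) lc by blast
    have len0: "length lam0 = length lam" using lc by simp
    have P0: "lamPerpB lam0 = lamPerpB lam" using perp_scale[of c lam0] c1 lc by simp
    have M: "\<exists>d\<ge>1. nu = map (\<lambda>x. d*x) lam0"
      if hyp: "is_partition nu" "a>0" "b>0" "map (\<lambda>x. a*x) nu = map (\<lambda>x. b*x) lam0" for nu a b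
    proof -
      obtain rho d e where rde: "nu = map (\<lambda>x. d*x) rho" "lam0 = map (\<lambda>x. e*x) rho"
        using Lprop[OF hyp(2,3,4)] by blast
      have pr: "is_partition rho" and e1: "e \<ge> 1" using part_scale p0 rde(2) by metis+
      have "lam = map (\<lambda>x. (c*e)*x) rho" using lc rde(2) by (simp add: mult.assoc)
      then have "rho \<in> C" unfolding C_def using pr by blast
      then have "hd lam0 \<le> hd rho" using l0(2) by blast
      moreover have "rho \<noteq> []" using pr is_partition_def by blast
      moreover have "hd rho \<ge> 1" using pr \<open>rho \<noteq> []\<close> unfolding is_partition_def by simp
      ultimately have "e = 1" using rde(2) e1 by (simp add: hd_map)
      then have "lam0 = rho" using rde(2) by simp
      moreover have "d \<ge> 1" using part_scale hyp(1) rde(1) by blast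
      ultimately show ?thesis using rde(1) by blast
    qed
    have K: "\<exists>a b. a>0 \<and> b>0 \<and> map (\<lambda>x. a*x) nu = map (\<lambda>x. b*x) lam0" if "red lam0 nu" for nu
    proof -
      have r: "red lam nu" using that less.prems(1) len0 P0 unfolding red_def by simp
      have "length nu = length lam" using red_len[OF r] short r by (simp add: le_antisym)
      then obtain a b where "a>0" "b>0" "map (\<lambda>x. a*x) nu = map (\<lambda>x. b*x) lam"
        using KL[OF r _ short] by blast
      then show ?thesis using lc c1 by (intro exI[of _ a] exI[of _ "b*c"]) (simp add: mult.assoc)
    qed
    have nov: "novel lam0"
      unfolding novel_def
    proof (intro conjI notI allI impI)
      show "is_partition lam0" by fact
      show "lamPerpB lam0 = {} \<Longrightarrow> False" using P0 less.prems(2) by simp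
    next
      fix nu assume "\<exists>mu. strictly_reduces lam0 mu"
      then obtain nu where s: "lam0 \<Rightarrow>\<^sub>p nu" "\<not> (nu \<Rightarrow>\<^sub>p lam0)" unfolding strictly_reduces_def by blast
      have r: "red lam0 nu" using reduces_to_red s(1) by blast
      then obtain a b where ab: "a>0" "b>0" "map (\<lambda>x. a*x) nu = map (\<lambda>x. b*x) lam0" using K by blast
      have "lamPerpB nu = lamPerpB lam0" using perp_prop[OF ab] .
      moreover have "length nu = length lam0" using ab(3) by (metis length_map)
      moreover have "is_partition nu" using r red_def by blast
      ultimately have "red nu lam0" using red_id p0 by simp
      then show False using s(2) red_to_reduces by blast
    next
      fix nu assume e: "equivalent lam0 nu"
      have r: "red lam0 nu" using equiv_red[OF e] .
      then obtain a b where ab: "a>0" "b>0" "map (\<lambda>x. a*x) nu = map (\<lambda>x. b*x) lam0" using K by blast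
      have "is_partition nu" using r red_def by blast
      then obtain d where d: "d \<ge> 1" "nu = map (\<lambda>x. d*x) lam0" using M ab by blast
      obtain y ys where yy: "lam0 = y # ys" using p0 is_partition_def by (cases lam0) auto
      have "y \<ge> 1" using p0 yy is_partition_def by auto
      show "lex_le lam0 nu"
      proof (cases "d = 1")
        case True then show ?thesis using d by (simp add: lex_le_def)
      next
        case False
        then have "y < d*y" using d(1) \<open>y\<ge>1\<close> by simp
        then show ?thesis using d(2) yy by (simp add: lex_le_def)
      qed
    qed
    show ?thesis
    proof (cases "c = 1")
      case True then show ?thesis using lc nov by simp
    next
      case False
      then have "c \<ge> 2" using c1 by simp
      then show ?thesis using lc nov by blast
    qed
  qed
qed

theorem mainTheorem4:
  fixes lam :: "nat list"
  assumes "is_partition lam"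
  shows "(novel lam \<or> (\<exists>c::nat. \<exists>mu. c \<ge> 2 \<and> novel mu \<and> lam = map (\<lambda>x. c * x) mu))
    \<or> (\<exists>mu. novel mu \<and> length mu < length lam \<and> (lam \<Rightarrow>\<^sub>p mu))
    \<or> lamPerpB lam = {}"
  using main[OF assms] red_to_reduces by blast

end
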